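(* Let $A$ be an associative algebra (with identity) over a field $\mathbf{k}$, let $q\in A$ be an idempotent, let $(A,q):=\{x\in A\mid qxq=qx\}$, and fix $k\in\mathbf{k}$. Then $(A,q)$ is a (right) Leibniz algebra under the bracket $$\langle x,y\rangle_{4,k}:=xy-yx+yqx-xyq+kxqy-kqyx,\qquad x,y\in(A,q),$$ i.e. $\langle\langle x,y\rangle,z\rangle=\langle x,\langle y,z\rangle\rangle+\langle\langle x,z\rangle,y\rangle$ for all $x,y,z\in(A,q)$.
   Context: $(A,q)$ is the (right) invariant algebra induced by the idempotent $q$; it is a subalgebra of $A$. A (right) Leibniz algebra is a vector space with a bilinear operation $\langle\,,\,\rangle$ satisfying $\langle\langle x,y\rangle,z\rangle=\langle x,\langle y,z\rangle\rangle+\langle\langle x,z\rangle,y\rangle$. *)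

theory Defs
  imports Main "HOL.Vector_Spaces"
begin

definition algebra_over :: "('k::field \<Rightarrow> 'a::ring_1 \<Rightarrow> 'a) \<Rightarrow> bool" where
  "algebra_over s \<longleftrightarrow> vector_space s \<and>
     (\<forall>c x y. s c (x * y) = s c x * y) \<and> (\<forall>c x y. s c (x * y) = x * s c y)"

definition inv_alg :: "'a::ring_1 \<Rightarrow> 'a set" where
  "inv_alg q = {x. q * x * q = q * x}"

definition bracket4 :: "('k \<Rightarrow> 'a::ring_1 \<Rightarrow> 'a) \<Rightarrow> 'a \<Rightarrow> 'k \<Rightarrow> 'a \<Rightarrow> 'a \<Rightarrow> 'a" where
  "bracket4 s q k x y = x * y - y * x + y * q * x - x * y * q + s k (x * q * y) - s k (q * y * x)"

end

theory Submission
  imports Defs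
begin

lemma central:
  assumes "algebra_over s"
  shows "s c a = s c 1 * a" "s c 1 * a = a * s c 1"
  using assms unfolding algebra_over_def by (metis mult_1_left mult_1_right)+

lemma w2:
  fixes q a b :: "'a::ring_1"
  assumes "q*q = q" "q*a*q = q*a" "q*b*q=q*b"
  shows "q*(a*(b*q)) = q*(a*b)" "q*(a*(b*(q*w))) = q*(a*(b*w))"
proof -
  have "q*(a*(b*q)) = (q*a*q)*b*q" using assms(2) by (simp add: mult.assoc)
  also have "... = (q*a)*(q*b*q)" by (simp add: mult.assoc)
  also have "... = (q*a*q)*b" using assms(3) by (simp add: mult.assoc)
  also have "... = q*(a*b)" using assms(2) by (simp add: mult.assoc)
  finally show 1: "q*(a*(b*q)) = q*(a*b)" .
  then show "q*(a*(b*(q*w))) = q*(a*(b*w))" by (metis mult.assoc)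
qed

lemma w3:
  fixes q a b c :: "'a::ring_1"
  assumes "q*q = q" "q*a*q = q*a" "q*b*q=q*b" "q*c*q=q*c"
  shows "q*(a*(b*(c*q))) = q*(a*(b*c))" "q*(a*(b*(c*(q*w)))) = q*(a*(b*(c*w)))"
proof -
  have "q*(a*(b*(c*q))) = q*((a*b)*(c*q))" by (simp add: mult.assoc)
  also have "... = q*(a*b)*q*c*q" using w2(1)[OF assms(1-3)] by (simp add: mult.assoc)
  also have "... = q*(a*b)*(q*c*q)" by (simp add: mult.assoc)
  also have "... = q*(a*b)*q*c" using assms(4) by (simp add: mult.assoc)
  also have "... = q*(a*(b*c))" using w2(1)[OF assms(1-3)] by (simp add: mult.assoc)
  finally show "q*(a*(b*(c*q))) = q*(a*(b*c))" .
  then show "q*(a*(b*(c*(q*w)))) = q*(a*(b*(c*w)))" by (metis mult.assoc)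
qed

theorem proposition1p3:
  fixes s :: "'k::field \<Rightarrow> 'a::ring_1 \<Rightarrow> 'a" and q :: 'a and k :: 'k
  assumes "algebra_over s" and "q * q = q"
  shows "(\<forall>x\<in>inv_alg q. \<forall>y\<in>inv_alg q. bracket4 s q k x y \<in> inv_alg q) \<and>
         (\<forall>x\<in>inv_alg q. \<forall>y\<in>inv_alg q. \<forall>z\<in>inv_alg q.
            bracket4 s q k (bracket4 s q k x y) z =
              bracket4 s q k x (bracket4 s q k y z) + bracket4 s q k (bracket4 s q k x z) y)"
proof -
  define K where "K = s k 1"
  have sK: "\<And>a. s k a = K * a" using central(1)[OF assms(1)] K_def by blast
  have Kc: "\<And>a. a * K = K * a" using central(2)[OF assms(1)] K_def by metis
  have Kc2: "\<And>a b. a * (K * b) = K * (a * b)" by (metis Kc mult.assoc)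
  have br: "\<And>x y. bracket4 s q k x y = x * y - y * x + y * q * x - x * y * q + K * (x * q * y) - K * (q * y * x)"
    unfolding bracket4_def sK ..
  have qq: "\<And>w. q * (q * w) = q * w" using assms(2) by (metis mult.assoc)
  define I where "I = inv_alg q"
  have Iq: "\<And>a. a \<in> I \<Longrightarrow> q * (a * q) = q * a" by (simp add: I_def inv_alg_def mult.assoc)
  have Im: "\<And>a b. a \<in> I \<Longrightarrow> b \<in> I \<Longrightarrow> a * b \<in> I"
    unfolding I_def inv_alg_def by (simp add: mult.assoc) (metis mult.assoc)
  have Iw: "\<And>a w. a \<in> I \<Longrightarrow> w \<in> I \<Longrightarrow> q * (a * (w * q)) = q * (a * w)"
    using Iq Im by (metis mult.assoc)
  show ?thesis
  proof (intro conjI ballI)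
    fix x y assume mem: "x \<in> inv_alg q" "y \<in> inv_alg q"
    then have x0: "q*x*q = q*x" and y0: "q*y*q=q*y" using inv_alg_def by auto
    have x1: "q * (x * q) = q * x" and y1: "q * (y * q) = q * y"
      using mem by (auto simp: inv_alg_def mult.assoc)
    have x2: "\<And>w. q * (x * (q * w)) = q * (x * w)" by (metis x1 mult.assoc)
    have y2: "\<And>w. q * (y * (q * w)) = q * (y * w)" by (metis y1 mult.assoc)
    show "bracket4 s q k x y \<in> inv_alg q"
      unfolding inv_alg_def br
      by (simp add: algebra_simps Kc[of x] Kc[of y] Kc2[of x] Kc2[of y] Kc[of q] Kc2[of q] x1 x2 y1 y2 qq assms(2) w2[OF assms(2) x0 y0] w2[OF assms(2) y0 x0])
  next
    fix x y z assume mem: "x \<in> inv_alg q" "y \<in> inv_alg q" "z \<in> inv_alg q"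
    then have x0: "q*x*q = q*x" and y0: "q*y*q=q*y" and z0: "q*z*q=q*z" using inv_alg_def by auto
    have x1: "q * (x * q) = q * x" and y1: "q * (y * q) = q * y" and z1: "q * (z * q) = q * z"
      using mem by (auto simp: inv_alg_def mult.assoc)
    have x2: "\<And>w. q * (x * (q * w)) = q * (x * w)" by (metis x1 mult.assoc)
    have y2: "\<And>w. q * (y * (q * w)) = q * (y * w)" by (metis y1 mult.assoc)
    have z2: "\<And>w. q * (z * (q * w)) = q * (z * w)" by (metis z1 mult.assoc)
    show "bracket4 s q k (bracket4 s q k x y) z =
              bracket4 s q k x (bracket4 s q k y z) + bracket4 s q k (bracket4 s q k x z) y"
      unfolding br
      by (simp add: algebra_simps Kc[of x] Kc[of y] Kc[of z] Kc2[of x] Kc2[of y] Kc2[of z] Kc[of q] Kc2[of q] x1 x2 y1 y2 z1 z2 qq assms(2) w2[OF assms(2) x0 x0] w2[OF assms(2) x0 y0] w2[OF assms(2) x0 z0] w2[OF assms(2) y0 x0] w2[OF assms(2) y0 y0] w2[OF assms(2) y0 z0] w2[OF assms(2) z0 x0] w2[OF assms(2) z0 y0] w2[OF assms(2) z0 z0] w3[OF assms(2) x0 x0 x0] w3[OF assms(2) x0 x0 y0] w3[OF assms(2) x0 x0 z0] w3[OF assms(2) x0 y0 x0] w3[OF assms(2) x0 y0 y0] w3[OF assms(2) x0 y0 z0] w3[OF assms(2) x0 z0 x0] w3[OF assms(2) x0 z0 y0] w3[OF assms(2) x0 z0 z0] w3[OF assms(2) y0 x0 x0] w3[OF assms(2)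 y0 x0 y0] w3[OF assms(2) y0 x0 z0] w3[OF assms(2) y0 y0 x0] w3[OF assms(2) y0 y0 y0] w3[OF assms(2) y0 y0 z0] w3[OF assms(2) y0 z0 x0] w3[OF assms(2) y0 z0 y0] w3[OF assms(2) y0 z0 z0] w3[OF assms(2) z0 x0 x0] w3[OF assms(2) z0 x0 y0] w3[OF assms(2) z0 x0 z0] w3[OF assms(2) z0 y0 x0] w3[OF assms(2) z0 y0 y0] w3[OF assms(2) z0 y0 z0] w3[OF assms(2) z0 z0 x0] w3[OF assms(2) z0 z0 y0] w3[OF assms(2) z0 z0 z0])
  qed
qed

end
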